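(* Let $\beta_1,\dots,\beta_d$, $\bar{\mu}$, $\lambda$ and $R_n$ be as in the context, and assume $\lambda<\frac{4}{|\beta_1\cdots\beta_d|}$. Then $\bar{\mu}(R_n)$ grows exponentially in $n$, i.e. there exist $c>0$ and $\rho>1$ such that $\bar{\mu}(R_n)\ge c\rho^n$ for all $n\in\mathbb{N}$.
   Context: Let $\beta\in(1,2)$ be an algebraic integer none of whose Galois conjugates has modulus $1$. List all its Galois conjugates (both members of each complex-conjugate pair) as $\beta=\beta_1,\dots,\beta_d,\beta_{d+1},\dots,\beta_{d+s},\beta_{d+s+1}$, where $|\beta_1|,\dots,|\beta_d|>1$, $|\beta_{d+1}|,\dots,|\beta_{d+s}|<1$, and $\beta_{d+s+1}$ is real with $|\beta_{d+s+1}|>1$. For $z\in\mathbb{C}$ let $\mathbb{F}_z=\mathbb{R}$ if $z\in\mathbb{R}$ and $\mathbb{C}$ otherwise; let $\bar{\mathbb{K}}=\prod_{j=1}^{d+s+1}\mathbb{F}_{\beta_j}$ and $\bar{\beta}^n=(\beta_1^n,\dots,\beta_{d+s+1}^n)$. Let $\pi_e(x)=(x_1,\dots,x_d)$ and $\pi_{free}(x)=x_{d+s+1}$. For $j\le d$ let $I_{\beta_j}=[-\frac{1}{\beta_j-1},\frac{1}{\beta_j-1}]$ if $\beta_j>1$, $I_{\beta_j}=\{x\in\mathbb{R}:|x|\le\frac{2}{|\beta_j|-1}\}$ if $\beta_j<-1$, $I_{\beta_j}=\{z\in\mathbb{C}:|z|\le\frac{2}{|\beta_j|-1}\}$ if $\beta_j\notin\mathbb{R}$;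 $I=\prod_{j\le d}I_{\beta_j}$ and $S=\{x\in\bar{\mathbb{K}}:\pi_e(x)\in I\}$. Let $\bar{X}=\{\sum_{i=1}^n a_i\bar{\beta}^{n-i}:n\in\mathbb{N},a_i\in\{-1,0,1\}\}\cap S$. For $n\ge1$ and $x\in S$ let $\bar{\mu}_n(\{x\})=\#\{(a,b)\in\{0,1\}^n\times\{0,1\}^n:\sum_{i=1}^n(a_i-b_i)\bar{\beta}^{n-i}=x\}$. It is known (from earlier work of the authors) that there exist $\lambda>1$ and $f:\bar{X}\to(0,\infty)$ with $\lambda^{-n}\bar{\mu}_n(\{x\})\to f(x)$ for every $x\in\bar{X}$, and that $0<f(x)\le f(0)$; let $\bar{\mu}=\sum_{x\in\bar{X}}f(x)\delta_x$. For $n\ge0$ let $R_n=\{x\in\bar{X}:|\pi_{free}(x)|\le\sum_{i=0}^{n-1}|\beta_{d+s+1}|^i\}$. *)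

theory Defs
  imports "HOL-Analysis.Analysis" "HOL-Computational_Algebra.Computational_Algebra"
begin

text \<open>Conjugates of beta are given as a list bs of complex numbers,
  bs ! j corresponding to beta_(j+1). Points of the product space are
  represented as functions nat => complex (coordinate j for j < length bs).\<close>

definition conj_setup :: "real \<Rightarrow> complex list \<Rightarrow> nat \<Rightarrow> nat \<Rightarrow> bool" where
  "conj_setup \<beta> bs d s \<longleftrightarrow>
     (\<exists>p :: int poly. lead_coeff p = 1 \<and> irreducible p \<and>
        distinct bs \<and> set bs = {z. poly (map_poly of_int p) z = 0}) \<and>
     length bs = d + s + 1 \<and> bs ! 0 = complex_of_real \<beta> \<and>
     (\<forall>z\<in>set bs. norm z \<noteq> 1) \<and>
     (\<forall>j<d. norm (bs ! j) > 1) \<and>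
     (\<forall>j. d \<le> j \<and> j < d + s \<longrightarrow> norm (bs ! j) < 1) \<and>
     bs ! (d + s) \<in> \<real> \<and> norm (bs ! (d + s)) > 1"

definition conj_vec :: "complex list \<Rightarrow> int list \<Rightarrow> nat \<Rightarrow> complex" where
  "conj_vec bs a = (\<lambda>j. if j < length bs then
      (\<Sum>i<length a. of_int (a ! i) * (bs ! j) ^ (length a - 1 - i)) else 0)"

definition I_beta :: "complex \<Rightarrow> complex set" where
  "I_beta b = (if b \<in> \<real> then
      (if Re b > 1 then {x. x \<in> \<real> \<and> norm x \<le> 1 / (Re b - 1)}
       else {x. x \<in> \<real> \<and> norm x \<le> 2 / (norm b - 1)})
    else {z. norm z \<le> 2 / (norm b - 1)})"

definition S_set :: "complex list \<Rightarrow> nat \<Rightarrow> (nat \<Rightarrow> complex) set" where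
  "S_set bs d = {x. (\<forall>j<length bs. bs ! j \<in> \<real> \<longrightarrow> x j \<in> \<real>) \<and>
                    (\<forall>j\<ge>length bs. x j = 0) \<and>
                    (\<forall>j<d. x j \<in> I_beta (bs ! j))}"

definition Xbar :: "complex list \<Rightarrow> nat \<Rightarrow> (nat \<Rightarrow> complex) set" where
  "Xbar bs d = {conj_vec bs a | a. set a \<subseteq> {-1, 0, 1}} \<inter> S_set bs d"

definition mu_n :: "complex list \<Rightarrow> nat \<Rightarrow> (nat \<Rightarrow> complex) \<Rightarrow> nat" where
  "mu_n bs n x = card {(a, b). length a = n \<and> length b = n \<and>
       set a \<subseteq> {0, 1} \<and> set b \<subseteq> {0, 1} \<and>
       conj_vec bs (map2 (\<lambda>u v. u - v) a b) = x}"

definition R_set :: "complex list \<Rightarrow> nat \<Rightarrow> nat \<Rightarrow> nat \<Rightarrow> (nat \<Rightarrow> complex) set" where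
  "R_set bs d s n = {x \<in> Xbar bs d.
      norm (x (d + s)) \<le> (\<Sum>i<n. norm (bs ! (d + s)) ^ i)}"

end

theory Submission
  imports Defs
begin

fun hv :: "complex \<Rightarrow> int list \<Rightarrow> complex" where
  "hv b [] = 0"
| "hv b (x # xs) = of_int x * b ^ length xs + hv b xs"

lemma hv_sum: "(\<Sum>i<length a. of_int (a ! i) * b ^ (length a - 1 - i)) = hv b a"
proof (induction a)
  case Nil then show ?case by simp
next
  case (Cons x xs)
  show ?case
    unfolding length_Cons sum.lessThan_Suc_shift using Cons by simp
qed

lemma conj_vec_hv: "conj_vec bs a = (\<lambda>j. if j < length bs then hv (bs ! j) a else 0)"
  unfolding conj_vec_def hv_sum by simp

lemma hv_append: "hv b (xs @ ys) = b ^ length ys * hv b xs + hv b ys"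
  by (induction xs) (auto simp: algebra_simps power_add)

lemma hv_diff: "length xs = length ys \<Longrightarrow> hv b (map2 (\<lambda>u v. u - v) xs ys) = hv b xs - hv b ys"
proof (induction xs arbitrary: ys)
  case Nil then show ?case by simp
next
  case (Cons x xs)
  then obtain y ys' where "ys = y # ys'" "length xs = length ys'" by (cases ys) auto
  with Cons show ?case by (simp add: algebra_simps)
qed

lemma hv_real: "b \<in> \<real> \<Longrightarrow> hv b xs \<in> \<real>"
  by (induction xs) auto

lemma hv_cnj: "hv (cnj b) xs = cnj (hv b xs)"
  by (induction xs) auto

lemma hv_bound: "set xs \<subseteq> {-1,0,1} \<Longrightarrow> norm (hv b xs) \<le> (\<Sum>i<length xs. norm b ^ i)"
proof (induction xs)
  case Nil then show ?case by simp
next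
  case (Cons x xs)
  have "norm (of_int x * b ^ length xs) \<le> norm b ^ length xs"
    using Cons.prems by (auto simp: norm_mult norm_power)
  then have "norm (hv b (x # xs)) \<le> norm b ^ length xs + (\<Sum>i<length xs. norm b ^ i)"
    using Cons by (simp add: norm_triangle_le)
  then show ?case by simp
qed

lemma conj_vec_append0:
  assumes "conj_vec bs u = (\<lambda>_. 0)"
  shows "conj_vec bs (u @ v) = conj_vec bs v"
proof
  fix j
  have "j < length bs \<Longrightarrow> hv (bs ! j) u = 0" using assms unfolding conj_vec_hv by meson
  then show "conj_vec bs (u @ v) j = conj_vec bs v j"
    unfolding conj_vec_hv by (simp add: hv_append)
qed


lemma finite_pairs: "finite {(a::int list, b::int list). length a = n \<and> length b = n \<and> set a \<subseteq> {0, 1} \<and> set b \<subseteq> {0, 1} \<and> P a b}"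
proof -
  have "{(a::int list, b::int list). length a = n \<and> length b = n \<and> set a \<subseteq> {0, 1} \<and> set b \<subseteq> {0, 1} \<and> P a b}
     \<subseteq> {a. set a \<subseteq> {0,1} \<and> length a = n} \<times> {a. set a \<subseteq> {0,1} \<and> length a = n}" by auto
  moreover have "finite ({a::int list. set a \<subseteq> {0,1} \<and> length a = n} \<times> {a. set a \<subseteq> {0,1} \<and> length a = n})"
    by (intro finite_cartesian_product finite_lists_length_eq) auto
  ultimately show ?thesis by (rule finite_subset)
qed

lemma mu_mult:
  assumes "\<forall>j\<ge>length bs. x j = 0"
  shows "mu_n bs k (\<lambda>_. 0) * mu_n bs n x \<le> mu_n bs (k + n) x"
proof -
  define A where "A = {(a::int list, b::int list). length a = k \<and> length b = k \<and> set a \<subseteq> {0, 1} \<and> set b \<subseteq> {0, 1} \<and>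
       conj_vec bs (map2 (\<lambda>u v. u - v) a b) = (\<lambda>_. 0)}"
  define B where "B = {(a::int list, b::int list). length a = n \<and> length b = n \<and> set a \<subseteq> {0, 1} \<and> set b \<subseteq> {0, 1} \<and>
       conj_vec bs (map2 (\<lambda>u v. u - v) a b) = x}"
  define C where "C = {(a::int list, b::int list). length a = k + n \<and> length b = k + n \<and> set a \<subseteq> {0, 1} \<and> set b \<subseteq> {0, 1} \<and>
       conj_vec bs (map2 (\<lambda>u v. u - v) a b) = x}"
  define h where "h = (\<lambda>((a::int list, b::int list), (a', b')). (a @ a', b @ b'))"
  have inj: "inj_on h (A \<times> B)"
  proof (rule inj_onI)
    fix p q assume pq: "p \<in> A \<times> B" "q \<in> A \<times> B" "h p = h q"
    obtain a b a' b' where p: "p = ((a, b), (a', b'))" by (metis prod.exhaust)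
    obtain c e c' e' where q: "q = ((c, e), (c', e'))" by (metis prod.exhaust)
    have len: "length a = k" "length b = k" "length c = k" "length e = k"
      using pq(1,2) unfolding p q A_def by auto
    have eq: "a @ a' = c @ c'" "b @ b' = e @ e'" using pq(3) unfolding p q h_def by auto
    have "a = c \<and> a' = c'" using eq(1) len by (simp add: append_eq_append_conv)
    moreover have "b = e \<and> b' = e'" using eq(2) len by (simp add: append_eq_append_conv)
    ultimately show "p = q" unfolding p q by simp
  qed
  have sub: "h ` (A \<times> B) \<subseteq> C"
  proof
    fix y assume "y \<in> h ` (A \<times> B)"
    then obtain a b a' b' where ab: "(a, b) \<in> A" "(a', b') \<in> B" and y: "y = (a @ a', b @ b')"
      unfolding h_def by auto
    have "map2 (\<lambda>u v. u - v) (a @ a') (b @ b') = map2 (\<lambda>u v. u - v) a b @ map2 (\<lambda>u v. u - v) a' b'"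
      using ab unfolding A_def by simp
    then have "conj_vec bs (map2 (\<lambda>u v. u - v) (a @ a') (b @ b')) = x"
      using ab conj_vec_append0 unfolding A_def B_def by auto
    then show "y \<in> C" using ab y unfolding A_def B_def C_def by auto
  qed
  have fC: "finite C" unfolding C_def by (rule finite_pairs)
  have "card A * card B = card (h ` (A \<times> B))"
    using inj by (simp add: card_image card_cartesian_product)
  also have "\<dots> \<le> card C" using sub fC by (rule card_mono[rotated])
  finally show ?thesis unfolding mu_n_def A_def B_def C_def by simp
qed

lemma f_lower:
  fixes lam :: real and f :: "(nat \<Rightarrow> complex) \<Rightarrow> real"
  assumes lam: "lam > 1"
    and l0: "(\<lambda>k. real (mu_n bs k (\<lambda>_. 0)) / lam ^ k) \<longlonglongrightarrow> f (\<lambda>_. 0)"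
    and lx: "(\<lambda>k. real (mu_n bs k x) / lam ^ k) \<longlonglongrightarrow> f x"
    and xz: "\<forall>j\<ge>length bs. x j = 0"
  shows "f (\<lambda>_. 0) * (real (mu_n bs n x) / lam ^ n) \<le> f x"
proof -
  have l1: "(\<lambda>k. real (mu_n bs k (\<lambda>_. 0)) / lam ^ k * (real (mu_n bs n x) / lam ^ n))
      \<longlonglongrightarrow> f (\<lambda>_. 0) * (real (mu_n bs n x) / lam ^ n)"
    by (intro tendsto_mult l0 tendsto_const)
  have l2: "(\<lambda>k. real (mu_n bs (k + n) x) / lam ^ (k + n)) \<longlonglongrightarrow> f x"
    using LIMSEQ_ignore_initial_segment[OF lx, of n] by simp
  show ?thesis
  proof (rule LIMSEQ_le[OF l1 l2], intro exI allI impI)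
    fix k
    have "real (mu_n bs k (\<lambda>_. 0)) * real (mu_n bs n x) \<le> real (mu_n bs (k + n) x)"
      using mu_mult[OF xz, of k n] by (metis of_nat_le_iff of_nat_mult)
    then have "real (mu_n bs k (\<lambda>_. 0)) * real (mu_n bs n x) / lam ^ (k + n) \<le> real (mu_n bs (k + n) x) / lam ^ (k + n)"
      using lam by (intro divide_right_mono) auto
    then show "real (mu_n bs k (\<lambda>_. 0)) / lam ^ k * (real (mu_n bs n x) / lam ^ n) \<le> real (mu_n bs (k + n) x) / lam ^ (k + n)"
      by (simp add: power_add)
  qed
qed

lemma floor_close: "\<lfloor>x::real\<rfloor> = \<lfloor>y\<rfloor> \<Longrightarrow> \<bar>x - y\<bar> < 1"
  by (smt (verit) of_int_floor_le real_of_int_floor_add_one_gt)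

lemma floor_range:
  fixes x :: real and m :: int
  assumes "\<bar>x\<bar> < m"
  shows "\<lfloor>x\<rfloor> \<in> {-m..m}"
  using assms by (auto simp: floor_less_iff le_floor_iff) linarith+

lemma I_beta_mem:
  assumes b1: "norm b > 1" and zr: "b \<in> \<real> \<Longrightarrow> z \<in> \<real>"
    and br: "b \<in> \<real> \<Longrightarrow> norm z < 1 / (norm b - 1)"
    and bc: "norm z < 2 / (norm b - 1)"
  shows "z \<in> I_beta b"
proof (cases "b \<in> \<real>")
  case True
  show ?thesis
  proof (cases "Re b > 1")
    case True
    with \<open>b \<in> \<real>\<close> have "norm b = Re b" by (auto elim!: Reals_cases)
    then show ?thesis using \<open>b \<in> \<real>\<close> True zr br unfolding I_beta_def by auto
  next
    case False
    then show ?thesis using \<open>b \<in> \<real>\<close> zr bc unfolding I_beta_def by auto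
  qed
next
  case False
  then show ?thesis using bc unfolding I_beta_def by auto
qed

lemma cs_card:
  fixes W :: "'a set" and key :: "'a \<Rightarrow> 'b"
  assumes fW: "finite W"
  shows "real (card W) ^ 2 \<le> real (card {(a, b). a \<in> W \<and> b \<in> W \<and> key a = key b}) * real (card (key ` W))"
proof -
  define K where "K = key ` W"
  define F where "F k = {a \<in> W. key a = k}" for k
  have fK: "finite K" using fW unfolding K_def by simp
  have fF: "finite (F k)" for k using fW unfolding F_def by simp
  have W_eq: "W = (\<Union>k\<in>K. F k)" unfolding K_def F_def by auto
  have cW: "card W = (\<Sum>k\<in>K. card (F k))"
    unfolding W_eq by (rule card_UN_disjoint[OF fK]) (use fF in \<open>auto simp: F_def\<close>)
  have P_eq: "{(a, b). a \<in> W \<and> b \<in> W \<and> key a = key b} = (\<Union>k\<in>K. F k \<times> F k)"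
    unfolding K_def F_def by auto
  have cP: "card {(a, b). a \<in> W \<and> b \<in> W \<and> key a = key b} = (\<Sum>k\<in>K. card (F k) * card (F k))"
    unfolding P_eq by (subst card_UN_disjoint[OF fK]) (use fF fW in \<open>auto simp: F_def card_cartesian_product\<close>)
  have "real (card W) ^ 2 = (\<Sum>k\<in>K. real (card (F k))) ^ 2" unfolding cW by simp
  also have "\<dots> \<le> (\<Sum>k\<in>K. (real (card (F k)))\<^sup>2) * card K" by (rule sum_squared_le_sum_of_squares)
  also have "\<dots> = real (card {(a, b). a \<in> W \<and> b \<in> W \<and> key a = key b}) * real (card (key ` W))"
    unfolding cP K_def by (simp add: power2_eq_square)
  finally show ?thesis .
qed

lemma geo_bound: "r > 1 \<Longrightarrow> (\<Sum>i<n. (r::real) ^ i) * (r - 1) < r ^ n"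
proof -
  assume r: "r > 1"
  have "(\<Sum>i<n. r ^ i) * (r - 1) = r ^ n - 1"
    by (induction n) (auto simp: algebra_simps)
  then show ?thesis by simp
qed

lemma prod_g_le:
  fixes bs :: "complex list" and d :: nat
  assumes len: "d \<le> length bs"
    and big: "\<forall>j<d. norm (bs ! j) > 1"
    and cj: "\<forall>j<d. Im (bs ! j) \<noteq> 0 \<longrightarrow> (\<exists>j'<d. bs ! j' = cnj (bs ! j))"
    and dist: "distinct bs"
  shows "(\<Prod>j\<in>{j. j < d \<and> Im (bs ! j) \<ge> 0}. norm (bs ! j) * (if Im (bs ! j) = 0 then 1 else norm (bs ! j)))
         \<le> norm (\<Prod>j<d. bs ! j)"
proof -
  define r where "r j = norm (bs ! j)" for j
  define J where "J = {j. j < d \<and> Im (bs ! j) \<ge> 0}"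
  define Jp where "Jp = {j. j < d \<and> Im (bs ! j) > 0}"
  define Jn where "Jn = {j. j < d \<and> Im (bs ! j) < 0}"
  define \<sigma> where "\<sigma> j = (SOME j'. j' < d \<and> bs ! j' = cnj (bs ! j))" for j
  have fJ: "finite J" "finite Jp" "finite Jn" unfolding J_def Jp_def Jn_def by auto
  have \<sigma>: "\<sigma> j < d \<and> bs ! (\<sigma> j) = cnj (bs ! j)" if "j \<in> Jp" for j
  proof -
    have "\<exists>j'<d. bs ! j' = cnj (bs ! j)" using cj that unfolding Jp_def by auto
    then show ?thesis unfolding \<sigma>_def by (rule someI_ex[where P = "\<lambda>j'. j' < d \<and> bs ! j' = cnj (bs ! j)", simplified conj_imp_eq_imp_imp])
  qed
  have inj: "inj_on \<sigma> Jp"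
  proof (rule inj_onI)
    fix x y assume xy: "x \<in> Jp" "y \<in> Jp" "\<sigma> x = \<sigma> y"
    then have "cnj (bs ! x) = cnj (bs ! y)" using \<sigma>[of x] \<sigma>[of y] by metis
    then have "bs ! x = bs ! y" by simp
    moreover have "x < length bs" "y < length bs" using xy len unfolding Jp_def by auto
    ultimately show "x = y" using dist nth_eq_iff_index_eq by blast
  qed
  have sub: "\<sigma> ` Jp \<subseteq> Jn" using \<sigma> unfolding Jp_def Jn_def by auto
  have r1: "r j \<ge> 1" if "j < d" for j using big that unfolding r_def by force
  have "(\<Prod>j\<in>J. r j * (if Im (bs ! j) = 0 then 1 else r j)) = (\<Prod>j\<in>J. r j) * (\<Prod>j\<in>J. (if Im (bs ! j) = 0 then 1 else r j))"
    by (rule prod.distrib)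
  also have "(\<Prod>j\<in>J. (if Im (bs ! j) = 0 then 1 else r j)) = (\<Prod>j\<in>Jp. r j)"
  proof -
    have "(\<Prod>j\<in>J. (if Im (bs ! j) = 0 then 1 else r j)) = (\<Prod>j\<in>J \<inter> {j. Im (bs ! j) = 0}. 1) * (\<Prod>j\<in>J \<inter> - {j. Im (bs ! j) = 0}. r j)"
      by (rule prod.If_cases[OF fJ(1)])
    also have "J \<inter> - {j. Im (bs ! j) = 0} = Jp" unfolding J_def Jp_def by auto
    finally show ?thesis by simp
  qed
  also have "(\<Prod>j\<in>Jp. r j) = (\<Prod>j\<in>\<sigma> ` Jp. r j)"
  proof -
    have "(\<Prod>j\<in>\<sigma> ` Jp. r j) = (\<Prod>j\<in>Jp. r (\<sigma> j))" using prod.reindex[OF inj] by simp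
    also have "\<dots> = (\<Prod>j\<in>Jp. r j)" using \<sigma> unfolding r_def by (intro prod.cong) auto
    finally show ?thesis by simp
  qed
  also have "(\<Prod>j\<in>\<sigma> ` Jp. r j) \<le> (\<Prod>j\<in>Jn. r j)"
    by (rule prod_mono2[OF fJ(3) sub]) (use r1 in \<open>auto simp: Jn_def\<close>, smt (verit) r1 image_subset_iff mem_Collect_eq sub Jn_def)
  finally have "(\<Prod>j\<in>J. r j * (if Im (bs ! j) = 0 then 1 else r j)) \<le> (\<Prod>j\<in>J. r j) * (\<Prod>j\<in>Jn. r j)"
    by (metis mult_left_mono prod_nonneg r_def norm_ge_zero)
  also have "\<dots> = (\<Prod>j\<in>J \<union> Jn. r j)"
    by (rule prod.union_disjoint[symmetric]) (use fJ in \<open>auto simp: J_def Jn_def\<close>)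
  also have "J \<union> Jn = {..<d}" unfolding J_def Jn_def by auto
  also have "(\<Prod>j\<in>{..<d}. r j) = norm (\<Prod>j<d. bs ! j)" unfolding r_def by (rule prod_norm)
  finally show ?thesis unfolding J_def r_def .
qed

lemma cell_close:
  fixes t :: real and z1 z2 :: complex
  assumes t: "t > 0" and e: "(\<lfloor>Re z1 * t\<rfloor>, \<lfloor>Im z1 * t\<rfloor>) = (\<lfloor>Re z2 * t\<rfloor>, \<lfloor>Im z2 * t\<rfloor>)"
  shows "\<bar>Re (z1 - z2)\<bar> < 1 / t" "\<bar>Im (z1 - z2)\<bar> < 1 / t"
proof -
  have "\<bar>Re z1 * t - Re z2 * t\<bar> < 1" using e floor_close by auto
  then have "\<bar>Re (z1 - z2)\<bar> * t < 1" using t by (simp add: left_diff_distrib[symmetric] abs_mult)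
  then show "\<bar>Re (z1 - z2)\<bar> < 1 / t" using t by (simp add: field_simps)
  have "\<bar>Im z1 * t - Im z2 * t\<bar> < 1" using e floor_close by auto
  then have "\<bar>Im (z1 - z2)\<bar> * t < 1" using t by (simp add: left_diff_distrib[symmetric] abs_mult)
  then show "\<bar>Im (z1 - z2)\<bar> < 1 / t" using t by (simp add: field_simps)
qed

lemma card_Box:
  fixes r :: real and n :: nat and m :: int
  assumes r: "r \<ge> 1" and m: "m = \<lceil>r ^ n\<rceil>"
  shows "real (card {-m..m}) \<le> 5 * r ^ n"
proof -
  have rn: "r ^ n \<ge> 1" using r by (simp add: one_le_power)
  have "real_of_int m \<le> r ^ n + 1" using m by linarith
  moreover have "m \<ge> 0" using m rn by linarith
  ultimately show ?thesis using rn by simp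
qed

lemma count_bound:
  fixes bs :: "complex list" and d n :: nat
  assumes len: "d \<le> length bs"
    and big: "\<forall>j<d. norm (bs ! j) > 1"
    and cj: "\<forall>j<d. Im (bs ! j) \<noteq> 0 \<longrightarrow> (\<exists>j'<d. bs ! j' = cnj (bs ! j))"
    and dist: "distinct bs"
  shows "4 ^ n \<le> real (card {(a, b). length a = n \<and> length b = n \<and> set a \<subseteq> {0, 1} \<and> set b \<subseteq> {0, 1} \<and>
            conj_vec bs (map2 (\<lambda>u v. u - v) a b) \<in> S_set bs d}) * (25 ^ d * norm (\<Prod>j<d. bs ! j) ^ n)"
proof -
  define Q where "Q = {(a::int list, b::int list). length a = n \<and> length b = n \<and> set a \<subseteq> {0, 1} \<and> set b \<subseteq> {0, 1} \<and>
            conj_vec bs (map2 (\<lambda>u v. u - v) a b) \<in> S_set bs d}"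
  define W where "W = {a::int list. set a \<subseteq> {0,1} \<and> length a = n}"
  have fW: "finite W" unfolding W_def by (rule finite_lists_length_eq) auto
  have c2: "card {0::int,1} = 2" by simp
  have cW: "card W = 2 ^ n" unfolding W_def using card_lists_length_eq[of "{0::int,1}" n] c2 by simp
  define r where "r j = norm (bs ! j)" for j
  define t where "t j = r j - 1" for j
  define cell where "cell j z = (\<lfloor>Re z * t j\<rfloor>, \<lfloor>Im z * t j\<rfloor>)" for j z
  define J where "J = {j. j < d \<and> Im (bs ! j) \<ge> 0}"
  define key where "key a = restrict (\<lambda>j. cell j (hv (bs ! j) a)) J" for a
  define m where "m j = \<lceil>r j ^ n\<rceil>" for j
  define Box where "Box j = {-m j..m j} \<times> (if Im (bs ! j) = 0 then {0} else {-m j..m j})" for j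
  define g where "g j = r j * (if Im (bs ! j) = 0 then 1 else r j)" for j
  have fJ: "finite J" unfolding J_def by auto
  have r1: "r j > 1" if "j < d" for j using big that unfolding r_def by auto
  have t0: "t j > 0" if "j < d" for j using r1[OF that] unfolding t_def by auto
  have hvb: "norm (hv (bs ! j) a) * t j < r j ^ n" if "j < d" "a \<in> W" for j a
  proof -
    have "norm (hv (bs ! j) a) \<le> (\<Sum>i<n. r j ^ i)" using hv_bound[of a "bs ! j"] that(2) unfolding W_def r_def by auto
    then have "norm (hv (bs ! j) a) * t j \<le> (\<Sum>i<n. r j ^ i) * (r j - 1)" using t0[OF that(1)] unfolding t_def
      by (intro mult_right_mono) auto
    also have "\<dots> < r j ^ n" by (rule geo_bound[OF r1[OF that(1)]])
    finally show ?thesis .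
  qed
  have key_in: "key ` W \<subseteq> Pi\<^sub>E J Box"
  proof
    fix y assume "y \<in> key ` W"
    then obtain a where a: "a \<in> W" "y = key a" by auto
    show "y \<in> Pi\<^sub>E J Box" unfolding a key_def restrict_PiE_iff
    proof
      fix j assume j: "j \<in> J"
      then have jd: "j < d" unfolding J_def by auto
      define z where "z = hv (bs ! j) a"
      have zb: "norm z * t j < m j" using hvb[OF jd a(1)] unfolding z_def m_def by linarith
      have "\<bar>Re z * t j\<bar> = \<bar>Re z\<bar> * t j" using t0[OF jd] by (simp add: abs_mult)
      also have "\<dots> \<le> norm z * t j" by (intro mult_right_mono abs_Re_le_cmod) (use t0[OF jd] in auto)
      also note zb
      finally have "\<bar>Re z * t j\<bar> < m j" .
      then have c1: "\<lfloor>Re z * t j\<rfloor> \<in> {-m j..m j}" by (rule floor_range)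
      have "\<bar>Im z * t j\<bar> = \<bar>Im z\<bar> * t j" using t0[OF jd] by (simp add: abs_mult)
      also have "\<dots> \<le> norm z * t j" by (intro mult_right_mono abs_Im_le_cmod) (use t0[OF jd] in auto)
      also note zb
      finally have "\<bar>Im z * t j\<bar> < m j" .
      then have c2: "\<lfloor>Im z * t j\<rfloor> \<in> {-m j..m j}" by (rule floor_range)
      have c3: "Im z = 0" if "Im (bs ! j) = 0"
      proof -
        have "bs ! j \<in> \<real>" using that by (simp add: complex_is_Real_iff)
        then have "z \<in> \<real>" unfolding z_def by (rule hv_real)
        then show ?thesis by (simp add: complex_is_Real_iff)
      qed
      show "cell j (hv (bs ! j) a) \<in> Box j"
        unfolding cell_def Box_def z_def[symmetric] using c1 c2 c3 by auto
    qed
  qed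
  have fBox: "finite (Box j)" for j unfolding Box_def by auto
  have fPi: "finite (Pi\<^sub>E J Box)" using fJ fBox by (intro finite_PiE) auto
  have cBox: "real (card (Box j)) \<le> 25 * g j ^ n" if "j \<in> J" for j
  proof -
    have jd: "j < d" using that unfolding J_def by auto
    have b5: "real (card {-m j..m j}) \<le> 5 * r j ^ n"
      by (rule card_Box) (use r1[OF jd] m_def in auto)
    have rn: "r j ^ n \<ge> 1" using r1[OF jd] by (simp add: one_le_power)
    show ?thesis
    proof (cases "Im (bs ! j) = 0")
      case True
      then have "card (Box j) = card {-m j..m j}" unfolding Box_def by (simp add: card_cartesian_product)
      then show ?thesis using b5 rn True unfolding g_def by simp
    next
      case False
      then have "real (card (Box j)) = real (card {-m j..m j}) * real (card {-m j..m j})"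
        unfolding Box_def by (simp add: card_cartesian_product)
      also have "\<dots> \<le> (5 * r j ^ n) * (5 * r j ^ n)" using b5 by (intro mult_mono) auto
      also have "\<dots> = 25 * g j ^ n" using False unfolding g_def by (simp add: power_mult_distrib)
      finally show ?thesis .
    qed
  qed
  have g0: "g j \<ge> 0" for j unfolding g_def r_def by auto
  have "real (card (key ` W)) \<le> real (card (Pi\<^sub>E J Box))"
    using card_mono[OF fPi key_in] by simp
  also have "\<dots> = (\<Prod>j\<in>J. real (card (Box j)))" by (simp add: card_PiE[OF fJ])
  also have "\<dots> \<le> (\<Prod>j\<in>J. 25 * g j ^ n)" by (rule prod_mono) (use cBox in auto)
  also have "\<dots> = 25 ^ card J * (\<Prod>j\<in>J. g j) ^ n" by (simp add: prod.distrib prod_power_distrib)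
  also have "\<dots> \<le> 25 ^ d * norm (\<Prod>j<d. bs ! j) ^ n"
  proof (rule mult_mono)
    have "card J \<le> card {..<d}" unfolding J_def by (rule card_mono) auto
    then show "(25::real) ^ card J \<le> 25 ^ d" by (intro power_increasing) auto
    have "(\<Prod>j\<in>J. g j) \<le> norm (\<Prod>j<d. bs ! j)"
      using prod_g_le[OF len big cj dist] unfolding g_def r_def J_def .
    then show "(\<Prod>j\<in>J. g j) ^ n \<le> norm (\<Prod>j<d. bs ! j) ^ n"
      by (intro power_mono) (auto intro: prod_nonneg g0)
  qed (auto intro: zero_le_power prod_nonneg g0)
  finally have ckey: "real (card (key ` W)) \<le> 25 ^ d * norm (\<Prod>j<d. bs ! j) ^ n" .
  have inS: "conj_vec bs (map2 (\<lambda>u v. u - v) a b) \<in> S_set bs d" if ab: "a \<in> W" "b \<in> W" "key a = key b" for a b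
  proof -
    have lab: "length a = length b" using ab unfolding W_def by auto
    have cv: "conj_vec bs (map2 (\<lambda>u v. u - v) a b) j = hv (bs ! j) a - hv (bs ! j) b" if "j < length bs" for j
      using that lab by (simp add: conj_vec_hv hv_diff)
    have bndJ: "norm (hv (bs ! j) a - hv (bs ! j) b) < 2 / t j \<and>
        (bs ! j \<in> \<real> \<longrightarrow> norm (hv (bs ! j) a - hv (bs ! j) b) < 1 / t j)" if j: "j \<in> J" for j
    proof -
      have jd: "j < d" using j unfolding J_def by auto
      have "key a j = key b j" using ab(3) by simp
      then have "cell j (hv (bs ! j) a) = cell j (hv (bs ! j) b)"
        using j unfolding key_def restrict_apply by simp
      then have e: "(\<lfloor>Re (hv (bs ! j) a) * t j\<rfloor>, \<lfloor>Im (hv (bs ! j) a) * t j\<rfloor>) = (\<lfloor>Re (hv (bs ! j) b) * t j\<rfloor>, \<lfloor>Im (hv (bs ! j) b) * t j\<rfloor>)"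
        unfolding cell_def .
      note cc = cell_close[OF t0[OF jd] e]
      have n1: "norm (hv (bs ! j) a - hv (bs ! j) b) < 2 / t j"
        using cmod_le[of "hv (bs ! j) a - hv (bs ! j) b"] cc by simp
      have n2: "norm (hv (bs ! j) a - hv (bs ! j) b) < 1 / t j" if "bs ! j \<in> \<real>"
      proof -
        have "hv (bs ! j) a - hv (bs ! j) b \<in> \<real>" using hv_real[OF that] by (simp add: Reals_diff)
        then have "norm (hv (bs ! j) a - hv (bs ! j) b) = \<bar>Re (hv (bs ! j) a - hv (bs ! j) b)\<bar>"
          by (intro cmod_eq_Re) (simp add: complex_is_Real_iff)
        then show ?thesis using cc by simp
      qed
      show ?thesis using n1 n2 by auto
    qed
    have I: "conj_vec bs (map2 (\<lambda>u v. u - v) a b) j \<in> I_beta (bs ! j)" if jd: "j < d" for j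
    proof -
      have jl: "j < length bs" using jd len by simp
      show ?thesis
      proof (cases "j \<in> J")
        case True
        show ?thesis unfolding cv[OF jl]
          by (rule I_beta_mem) (use bndJ[OF True] big jd in \<open>auto simp: t_def r_def intro: Reals_diff hv_real\<close>)
      next
        case False
        then have neg: "Im (bs ! j) < 0" using jd unfolding J_def by auto
        then obtain j' where j': "j' < d" "bs ! j' = cnj (bs ! j)" using cj jd by force
        have j'J: "j' \<in> J" using j' neg unfolding J_def by auto
        have bj: "bs ! j = cnj (bs ! j')" using j' by simp
        have eqz: "hv (bs ! j) a - hv (bs ! j) b = cnj (hv (bs ! j') a - hv (bs ! j') b)"
          unfolding bj hv_cnj by simp
        have tj: "t j = t j'" unfolding t_def r_def bj by simp
        have nr: "bs ! j \<notin> \<real>" using neg by (auto simp: complex_is_Real_iff)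
        show ?thesis unfolding cv[OF jl]
        proof (rule I_beta_mem)
          show "norm (bs ! j) > 1" using big jd by auto
          show "norm (hv (bs ! j) a - hv (bs ! j) b) < 2 / (norm (bs ! j) - 1)"
            using bndJ[OF j'J] unfolding eqz complex_mod_cnj using tj unfolding t_def r_def by simp
        qed (use nr in auto)
      qed
    qed
    show ?thesis unfolding S_set_def
    proof (intro CollectI conjI allI impI)
      fix j assume "j < length bs" "bs ! j \<in> \<real>"
      then show "conj_vec bs (map2 (\<lambda>u v. u - v) a b) j \<in> \<real>"
        using cv hv_real by (simp add: Reals_diff)
    next
      fix j assume "length bs \<le> j"
      then show "conj_vec bs (map2 (\<lambda>u v. u - v) a b) j = 0" by (simp add: conj_vec_hv)
    next
      fix j assume "j < d" then show "conj_vec bs (map2 (\<lambda>u v. u - v) a b) j \<in> I_beta (bs ! j)" by (rule I)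
    qed
  qed
  have subQ: "{(a, b). a \<in> W \<and> b \<in> W \<and> key a = key b} \<subseteq> Q"
    using inS unfolding Q_def W_def by auto
  have fQ: "finite Q" unfolding Q_def by (rule finite_pairs)
  have "real (card W) ^ 2 \<le> real (card {(a, b). a \<in> W \<and> b \<in> W \<and> key a = key b}) * real (card (key ` W))"
    by (rule cs_card[OF fW])
  also have "\<dots> \<le> real (card Q) * real (card (key ` W))"
    using card_mono[OF fQ subQ] by (intro mult_right_mono) auto
  also have "\<dots> \<le> real (card Q) * (25 ^ d * norm (\<Prod>j<d. bs ! j) ^ n)"
    using ckey by (intro mult_left_mono) auto
  finally have X: "real (card W) ^ 2 \<le> real (card Q) * (25 ^ d * norm (\<Prod>j<d. bs ! j) ^ n)" .
  have "real (card W) ^ 2 = 4 ^ n" unfolding cW by (simp add: power2_eq_square power_mult_distrib[symmetric])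
  with X show ?thesis unfolding Q_def by simp
qed

lemma conj_facts:
  assumes conj: "conj_setup \<beta> bs d s"
  shows "d \<le> length bs" "\<forall>j<d. norm (bs ! j) > 1"
    "\<forall>j<d. Im (bs ! j) \<noteq> 0 \<longrightarrow> (\<exists>j'<d. bs ! j' = cnj (bs ! j))" "distinct bs"
    "d + s < length bs"
proof -
  obtain p :: "int poly" where dist: "distinct bs" and setbs: "set bs = {z. poly (map_poly of_int p) z = 0}"
    using conj unfolding conj_setup_def by blast
  have len: "length bs = d + s + 1" and big: "\<forall>j<d. norm (bs ! j) > 1"
    and small: "\<forall>j. d \<le> j \<and> j < d + s \<longrightarrow> norm (bs ! j) < 1"
    and fr: "bs ! (d + s) \<in> \<real>" using conj unfolding conj_setup_def by auto
  show "d \<le> length bs" "\<forall>j<d. norm (bs ! j) > 1" "distinct bs" "d + s < length bs" using len big dist by auto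
  show "\<forall>j<d. Im (bs ! j) \<noteq> 0 \<longrightarrow> (\<exists>j'<d. bs ! j' = cnj (bs ! j))"
  proof (intro allI impI)
    fix j assume jd: "j < d" and im: "Im (bs ! j) \<noteq> 0"
    have "bs ! j \<in> set bs" using jd len by simp
    then have r0: "poly (map_poly of_int p) (bs ! j) = 0" using setbs by auto
    have creal: "poly.coeff (map_poly (of_int :: int \<Rightarrow> complex) p) n \<in> \<real>" for n
      by (simp add: coeff_map_poly)
    have "poly (map_poly of_int p) (cnj (bs ! j)) = 0"
      using real_poly_cnj_root_iff[OF creal] r0 by blast
    then have "cnj (bs ! j) \<in> set bs" using setbs by auto
    then obtain j' where j': "j' < length bs" "bs ! j' = cnj (bs ! j)" by (auto simp: in_set_conv_nth)
    have "j' < d"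
    proof (rule ccontr)
      assume "\<not> j' < d"
      moreover have "norm (bs ! j') > 1" using j' big jd by simp
      ultimately have "j' = d + s" using small j' len by (metis le_neq_implies_less not_le_imp_less Suc_eq_plus1 not_less_eq less_asym)
      then show False using fr j' im by (simp add: complex_is_Real_iff)
    qed
    then show "\<exists>j'<d. bs ! j' = cnj (bs ! j)" using j' by blast
  qed
qed

theorem lemma4p2:
  fixes \<beta> :: real and bs :: "complex list" and d s :: nat
    and lam :: real and f :: "(nat \<Rightarrow> complex) \<Rightarrow> real"
  assumes beta_range: "1 < \<beta>" "\<beta> < 2"
    and conj: "conj_setup \<beta> bs d s"
    and lam_gt1: "lam > 1"
    and lim: "\<forall>x\<in>Xbar bs d. (\<lambda>n. real (mu_n bs n x) / lam ^ n) \<longlonglongrightarrow> f x"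
    and f_bounds: "\<forall>x\<in>Xbar bs d. 0 < f x \<and> f x \<le> f (\<lambda>_. 0)"
    and lam_small: "lam < 4 / norm (\<Prod>j<d. bs ! j)"
  shows "\<exists>c>0. \<exists>\<rho>>1. \<forall>n. (\<Sum>\<^sub>\<infinity>x\<in>R_set bs d s n. ennreal (f x)) \<ge> ennreal (c * \<rho> ^ n)"
proof -
  note cf = conj_facts[OF conj]
  define P where "P = norm (\<Prod>j<d. bs ! j)"
  have P1: "P \<ge> 1" unfolding P_def prod_norm[symmetric]
    by (rule prod_ge_1) (use cf(2) in auto)
  define f0 where "f0 = f (\<lambda>_. 0)"
  have cv0: "conj_vec bs [] = (\<lambda>_. 0)" unfolding conj_vec_hv by (rule ext) simp
  have X0: "(\<lambda>_. 0) \<in> Xbar bs d"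
  proof -
    have "(\<lambda>_. 0) \<in> S_set bs d" unfolding S_set_def
      using cf(2) by (auto intro!: I_beta_mem)
    moreover have "(\<lambda>_. 0) \<in> {conj_vec bs a |a. set a \<subseteq> {- 1, 0, 1}}"
      by (rule CollectI, rule exI[of _ "[]"]) (simp add: cv0)
    ultimately show ?thesis unfolding Xbar_def by blast
  qed
  have f0: "f0 > 0" using f_bounds X0 unfolding f0_def by auto
  define c where "c = f0 / 25 ^ d"
  define \<rho> where "\<rho> = 4 / (lam * P)"
  have c0: "c > 0" unfolding c_def using f0 by simp
  have lP: "lam * P < 4"
  proof -
    have "lam < 4 / P" using lam_small unfolding P_def .
    then show ?thesis using P1 by (simp add: pos_less_divide_eq)
  qed
  have \<rho>1: "\<rho> > 1" unfolding \<rho>_def using lP lam_gt1 P1 by simp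
  show ?thesis
  proof (rule exI[of _ c], rule conjI[OF c0], rule exI[of _ \<rho>], rule conjI[OF \<rho>1], rule allI)
    fix n
    define Q where "Q = {(a::int list, b::int list). length a = n \<and> length b = n \<and> set a \<subseteq> {0, 1} \<and> set b \<subseteq> {0, 1} \<and>
            conj_vec bs (map2 (\<lambda>u v. u - v) a b) \<in> S_set bs d}"
    define g where "g = (\<lambda>(a, b). conj_vec bs (map2 (\<lambda>u v. u - v) a b))"
    define V where "V = g ` Q"
    have fQ: "finite Q" unfolding Q_def by (rule finite_pairs)
    have fV: "finite V" unfolding V_def using fQ by simp
    have cQ: "4 ^ n \<le> real (card Q) * (25 ^ d * P ^ n)"
      unfolding Q_def P_def by (rule count_bound[OF cf(1-4)])
    have VX: "V \<subseteq> R_set bs d s n"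
    proof
      fix x assume "x \<in> V"
      then obtain a b where ab: "(a, b) \<in> Q" "x = conj_vec bs (map2 (\<lambda>u v. u - v) a b)"
        unfolding V_def g_def by auto
      have digs: "set (map2 (\<lambda>u v. u - v) a b) \<subseteq> {-1, 0, 1}"
      proof
        fix y assume "y \<in> set (map2 (\<lambda>u v. u - v) a b)"
        then obtain u v where "(u, v) \<in> set (zip a b)" "y = u - v" by auto
        then have "u \<in> {0, 1}" "v \<in> {0, 1}" "y = u - v" using ab(1) unfolding Q_def
          by (auto dest: set_zip_leftD set_zip_rightD)
        then show "y \<in> {-1, 0, 1}" by auto
      qed
      have xS: "x \<in> S_set bs d" using ab unfolding Q_def by auto
      have "x \<in> {conj_vec bs a |a. set a \<subseteq> {- 1, 0, 1}}"
        by (rule CollectI, rule exI[of _ "map2 (\<lambda>u v. u - v) a b"]) (use ab(2) digs in simp)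
      then have "x \<in> Xbar bs d" unfolding Xbar_def using xS by blast
      moreover have "norm (x (d + s)) \<le> (\<Sum>i<n. norm (bs ! (d + s)) ^ i)"
      proof -
        have "x (d + s) = hv (bs ! (d + s)) (map2 (\<lambda>u v. u - v) a b)"
          using ab(2) cf(5) by (simp add: conj_vec_hv)
        moreover have "length (map2 (\<lambda>u v. u - v) a b) = n" using ab(1) unfolding Q_def by auto
        ultimately show ?thesis using hv_bound[OF digs] by simp
      qed
      ultimately show "x \<in> R_set bs d s n" unfolding R_set_def by auto
    qed
    have VX': "V \<subseteq> Xbar bs d" using VX unfolding R_set_def by auto
    have fpos: "f x > 0" if "x \<in> V" for x using f_bounds VX' that by auto
    have "(\<Sum>\<^sub>\<infinity>x\<in>V. ennreal (f x)) \<le> (\<Sum>\<^sub>\<infinity>x\<in>R_set bs d s n. ennreal (f x))"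
      by (rule infsum_mono_neutral) (use VX in \<open>auto intro: nonneg_summable_on_complete\<close>)
    moreover have "(\<Sum>\<^sub>\<infinity>x\<in>V. ennreal (f x)) = ennreal (\<Sum>x\<in>V. f x)"
      using fV fpos by (simp add: less_imp_le)
    moreover have "c * \<rho> ^ n \<le> (\<Sum>x\<in>V. f x)"
    proof -
      have fl: "f0 * (real (mu_n bs n x) / lam ^ n) \<le> f x" if "x \<in> V" for x
      proof -
        have xX: "x \<in> Xbar bs d" using VX' that by auto
        have xz: "\<forall>j\<ge>length bs. x j = 0" using xX unfolding Xbar_def by (auto simp: conj_vec_hv)
        show ?thesis unfolding f0_def
          by (rule f_lower[OF lam_gt1 _ _ xz]) (use lim X0 xX in auto)
      qed
      have cQV: "real (card Q) \<le> (\<Sum>x\<in>V. real (mu_n bs n x))"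
      proof -
        have Qeq: "Q = (\<Union>x\<in>V. {q \<in> Q. g q = x})" unfolding V_def by auto
        have "card Q = (\<Sum>x\<in>V. card {q \<in> Q. g q = x})"
          by (subst Qeq, rule card_UN_disjoint) (use fV fQ in auto)
        also have "\<dots> \<le> (\<Sum>x\<in>V. mu_n bs n x)"
        proof (rule sum_mono)
          fix x assume "x \<in> V"
          have "{q \<in> Q. g q = x} \<subseteq> {(a, b). length a = n \<and> length b = n \<and>
               set a \<subseteq> {0, 1} \<and> set b \<subseteq> {0, 1} \<and> conj_vec bs (map2 (\<lambda>u v. u - v) a b) = x}"
            unfolding Q_def g_def by auto
          then show "card {q \<in> Q. g q = x} \<le> mu_n bs n x" unfolding mu_n_def
            by (rule card_mono[OF finite_pairs])
        qed
        finally show ?thesis by (metis of_nat_le_iff of_nat_sum)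
      qed
      have pos: "25 ^ d * P ^ n > 0" using P1 by simp
      have "c * \<rho> ^ n = f0 / lam ^ n * (4 ^ n / (25 ^ d * P ^ n))"
        unfolding c_def \<rho>_def by (simp add: power_divide power_mult_distrib)
      also have "\<dots> \<le> f0 / lam ^ n * real (card Q)"
        using cQ pos f0 lam_gt1 by (intro mult_left_mono) (auto simp: field_simps)
      also have "\<dots> \<le> f0 / lam ^ n * (\<Sum>x\<in>V. real (mu_n bs n x))"
        using cQV f0 lam_gt1 by (intro mult_left_mono) auto
      also have "\<dots> = (\<Sum>x\<in>V. f0 * (real (mu_n bs n x) / lam ^ n))"
        by (simp add: sum_distrib_left)
      also have "\<dots> \<le> (\<Sum>x\<in>V. f x)" by (rule sum_mono) (rule fl)
      finally show ?thesis .
    qed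
    ultimately show "(\<Sum>\<^sub>\<infinity>x\<in>R_set bs d s n. ennreal (f x)) \<ge> ennreal (c * \<rho> ^ n)"
      by (metis ennreal_leI order_trans)
  qed
qed


end
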